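(* Let $\{a(n)\}_{n\in\mathbb{N}}$ be a sequence of non-negative numbers with $\sum_{n=1}^{\infty}a(n)\le 1$, and for $n\in\mathbb{N}$ let $B_n:=\{n,2n,\ldots,n^2\}$. Then for every $\varepsilon>0$ there exist infinitely many $n\in\mathbb{N}$ such that $\sum_{\lambda,\mu\in B_n,\ \mu<\lambda}a(\lambda-\mu)<\varepsilon$. *)

theory Defs
  imports "HOL-Analysis.Analysis"
begin

definition B :: "nat \<Rightarrow> nat set" where
  "B n = {k * n | k. k \<in> {1..n}}"

end

theory Submission imports Defs "HOL-Real_Asymp.Real_Asymp" "HOL-Computational_Algebra.Primes" begin

lemma exp_beats_poly: "\<exists>m::nat. 2 * (m+1)^(K+1) \<le> (2::nat)^m"
proof -
  have "((\<lambda>m::nat. 2 * real (m+1)^(K+1) / 2^m) \<longlongrightarrow> 0) at_top" by real_asymp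
  then have "eventually (\<lambda>m::nat. 2 * real (m+1)^(K+1) / 2^m < 1) at_top"
    by (rule order_tendstoD) simp
  then obtain m where "2 * real (m+1)^(K+1) / 2^m < 1" by (auto simp: eventually_at_top_linorder)
  then have "real (2 * (m+1)^(K+1)) < real (2^m)" by (simp add: field_simps)
  then show ?thesis by (intro exI[of _ m]) linarith
qed

lemma card_multiples: "card {n\<in>{1..X}. (p::nat) dvd n} \<le> X div p"
proof -
  have "{n\<in>{1..X}. p dvd n} \<subseteq> (\<lambda>k. k*p) ` {1..X div p}"
  proof
    fix n assume "n \<in> {n\<in>{1..X}. p dvd n}"
    then obtain k where k: "n = p * k" "1 \<le> n" "n \<le> X" by auto
    then have "p > 0" "k \<ge> 1" by (auto intro: Nat.gr0I)
    moreover have "k \<le> X div p" using k \<open>p>0\<close>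
      by (metis div_le_mono nonzero_mult_div_cancel_left not_gr0)
    ultimately show "n \<in> (\<lambda>k. k*p) ` {1..X div p}" using k by (auto simp: mult.commute)
  qed
  then have "card {n\<in>{1..X}. p dvd n} \<le> card ((\<lambda>k. k*p) ` {1..X div p})"
    by (intro card_mono) auto
  also have "\<dots> \<le> card {1..X div p}" by (rule card_image_le) auto
  finally show ?thesis by simp
qed

lemma erdos_step: "\<exists>X. (\<Sum>p\<in>{p. prime p \<and> K < p \<and> p \<le> X}. 1 / real p) \<ge> 1/2"
proof (rule ccontr)
  assume "\<not> ?thesis"
  hence H: "\<And>X. (\<Sum>p\<in>{p. prime p \<and> K < p \<and> p \<le> X}. 1 / real p) < 1/2" by (meson not_le)
  obtain m where m: "2 * (m+1)^(K+1) \<le> (2::nat)^m" using exp_beats_poly by blast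
  define X where "X = (2::nat)^m"
  define P where "P = {p. prime p \<and> K < p \<and> p \<le> X}"
  define A where "A = {n\<in>{1..X}. \<forall>p. prime p \<longrightarrow> p dvd n \<longrightarrow> p \<le> K}"
  define Bs where "Bs = (\<Union>p\<in>P. {n\<in>{1..X}. p dvd n})"
  have finP: "finite P" unfolding P_def by auto
  have Xpos: "X > 0" unfolding X_def by simp
  have cover: "{1..X} \<subseteq> A \<union> Bs"
  proof
    fix n assume n: "n \<in> {1..X}"
    show "n \<in> A \<union> Bs"
    proof (cases "n \<in> A")
      case False
      then obtain p where p: "prime p" "p dvd n" "\<not> p \<le> K" using n unfolding A_def by auto
      have "p \<le> n" using p n by (intro dvd_imp_le) auto
      then have "p \<in> P" using p n unfolding P_def by auto
      then show ?thesis using n p unfolding Bs_def by auto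
    qed auto
  qed
  have "X = card {1..X}" by simp
  also have "\<dots> \<le> card (A \<union> Bs)" using cover by (intro card_mono) (auto simp: A_def Bs_def finP)
  also have "\<dots> \<le> card A + card Bs" by (rule card_Un_le)
  finally have X1: "X \<le> card A + card Bs" .
  have "card Bs \<le> (\<Sum>p\<in>P. card {n\<in>{1..X}. p dvd n})" unfolding Bs_def by (rule card_UN_le[OF finP])
  also have "\<dots> \<le> (\<Sum>p\<in>P. X div p)" by (intro sum_mono card_multiples)
  finally have "real (card Bs) \<le> (\<Sum>p\<in>P. real (X div p))" by (metis of_nat_le_iff of_nat_sum)
  also have "\<dots> \<le> (\<Sum>p\<in>P. real X * (1 / real p))"
    by (intro sum_mono) (simp add: of_nat_div_le_of_nat)
  also have "\<dots> = real X * (\<Sum>p\<in>P. 1 / real p)" by (simp add: sum_distrib_left)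
  also have "\<dots> < real X * (1/2)" using H[of X] Xpos unfolding P_def by (intro mult_strict_left_mono) auto
  finally have cB: "real (card Bs) < real X / 2" by simp
  define f where "f = (\<lambda>n. \<lambda>i\<in>{..K}. if prime i then multiplicity i n else 0)"
  have img: "f ` A \<subseteq> PiE {..K} (\<lambda>_. {..m})"
  proof
    fix g assume "g \<in> f ` A"
    then obtain n where n: "n \<in> A" "g = f n" by auto
    have "g i \<le> m" if "i \<le> K" for i
    proof (cases "prime i")
      case True
      let ?k = "multiplicity i n"
      have "i ^ ?k dvd n" by (rule multiplicity_dvd)
      then have "i ^ ?k \<le> n" using n by (intro dvd_imp_le) (auto simp: A_def)
      moreover have "2 ^ ?k \<le> i ^ ?k" using prime_ge_2_nat[OF True] by (intro power_mono) auto
      moreover have "n \<le> 2 ^ m" using n unfolding A_def X_def by auto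
      ultimately have "(2::nat) ^ ?k \<le> 2 ^ m" by (meson order_trans)
      then have "?k \<le> m" by simp
      then show ?thesis using that True n by (simp add: f_def)
    qed (use that n in \<open>simp add: f_def\<close>)
    then show "g \<in> PiE {..K} (\<lambda>_. {..m})" using n by (auto simp: f_def)
  qed
  have inj: "inj_on f A"
  proof
    fix n n' assume nA: "n \<in> A" and nA': "n' \<in> A" and eq: "f n = f n'"
    have "multiplicity q n = multiplicity q n'" if q: "prime q" for q
    proof (cases "q \<le> K")
      case True
      then have "f n q = f n' q" using eq by simp
      then show ?thesis using True q by (simp add: f_def)
    next
      case False
      then have "\<not> q dvd n" "\<not> q dvd n'" using nA nA' q unfolding A_def by auto
      then show ?thesis by (simp add: not_dvd_imp_multiplicity_0)
    qed
    then have "normalize n = normalize n'"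
      using nA nA' by (intro multiplicity_eq_imp_eq) (auto simp: A_def)
    then show "n = n'" by simp
  qed
  have "card A = card (f ` A)" using inj by (simp add: card_image)
  also have "\<dots> \<le> card (PiE {..K} (\<lambda>_. {..m::nat}))" using img by (intro card_mono) (auto intro: finite_PiE)
  also have "\<dots> = (m+1)^(K+1)" by (simp add: card_PiE)
  finally have cA: "card A \<le> (m+1)^(K+1)" .
  have "real X \<le> real (card A) + real (card Bs)" using X1 by linarith
  also have "\<dots> < real ((m+1)^(K+1)) + real X / 2" using cA cB by linarith
  also have "\<dots> \<le> real X"
  proof -
    have "real (2 * (m+1)^(K+1)) \<le> real X" using m unfolding X_def by (simp only: of_nat_le_iff)
    then show ?thesis by simp
  qed
  finally show False by simp
qed

lemma primes_diverge: "\<exists>X. (\<Sum>p\<in>{p. prime p \<and> K < p \<and> p \<le> X}. 1 / real p) \<ge> real c / 2"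
proof (induction c)
  case 0
  show ?case by (intro exI[of _ 0] sum_nonneg) auto
next
  case (Suc c)
  then obtain X where X: "(\<Sum>p\<in>{p. prime p \<and> K < p \<and> p \<le> X}. 1 / real p) \<ge> real c / 2" by blast
  obtain Y where Y: "(\<Sum>p\<in>{p. prime p \<and> max K X < p \<and> p \<le> Y}. 1 / real p) \<ge> 1 / 2"
    using erdos_step by blast
  let ?S1 = "{p. prime p \<and> K < p \<and> p \<le> X}" and ?S2 = "{p. prime p \<and> max K X < p \<and> p \<le> Y}"
  let ?Z = "max X Y"
  have "real (Suc c) / 2 \<le> (\<Sum>p\<in>?S1. 1 / real p) + (\<Sum>p\<in>?S2. 1 / real p)"
    using X Y by (simp add: add_divide_distrib)
  also have "\<dots> = (\<Sum>p\<in>?S1 \<union> ?S2. 1 / real p)"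
    by (rule sum.union_disjoint[symmetric]) auto
  also have "\<dots> \<le> (\<Sum>p\<in>{p. prime p \<and> K < p \<and> p \<le> ?Z}. 1 / real p)"
  proof (rule sum_mono2)
    show "finite {p. prime p \<and> K < p \<and> p \<le> ?Z}" by auto
    show "?S1 \<union> ?S2 \<subseteq> {p. prime p \<and> K < p \<and> p \<le> ?Z}"
    proof
      fix p assume "p \<in> ?S1 \<union> ?S2"
      then show "p \<in> {p. prime p \<and> K < p \<and> p \<le> ?Z}"
        by auto
    qed
  qed auto
  finally show ?case by blast
qed

definition DD :: "nat \<Rightarrow> nat set" where "DD p = {d. p dvd d \<and> 0 < d \<and> d < p * p}"

lemma finite_DD: "finite (DD p)" unfolding DD_def by (rule finite_subset[of _ "{..<p*p}"]) auto

lemma DD_disjoint: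
  assumes "prime p" "prime q" "p \<noteq> q" shows "DD p \<inter> DD q = {}"
proof (rule ccontr)
  assume "DD p \<inter> DD q \<noteq> {}"
  then obtain d where d: "p dvd d" "q dvd d" "0 < d" "d < p*p" "d < q*q" unfolding DD_def by auto
  have "p * q dvd d" using d assms by (intro divides_mult primes_coprime) auto
  then have "p * q \<le> d" using d by (intro dvd_imp_le) auto
  moreover have "p * p \<le> p * q \<or> q * q \<le> p * q" by (cases "p \<le> q") (auto simp: mult.commute)
  ultimately show False using d by linarith
qed

lemma finite_B: "finite (B n)"
proof -
  have "B n = (\<lambda>k. k * n) ` {1..n}" unfolding B_def by auto
  then show ?thesis by simp
qed

lemma card_B: "card (B n) \<le> n"
proof -
  have "B n = (\<lambda>k. k * n) ` {1..n}" unfolding B_def by auto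
  then have "card (B n) \<le> card {1..n}" by (metis card_image_le finite_atLeastAtMost)
  then show ?thesis by simp
qed

lemma pair_sum_bound:
  fixes a :: "nat \<Rightarrow> real"
  assumes nonneg: "\<And>n. n \<ge> 1 \<Longrightarrow> a n \<ge> 0"
  shows "(\<Sum>(l, m) \<in> {(l, m). l \<in> B p \<and> m \<in> B p \<and> m < l}. a (l - m)) \<le> real p * sum a (DD p)"
proof -
  let ?P = "{(l, m). l \<in> B p \<and> m \<in> B p \<and> m < l}"
  have DDnn: "sum a (DD p) \<ge> 0" by (intro sum_nonneg nonneg) (auto simp: DD_def)
  have "?P = {x \<in> B p \<times> B p. snd x < fst x}" by auto
  then have "(\<Sum>(l, m) \<in> ?P. a (l - m)) = (\<Sum>x \<in> B p \<times> B p. if snd x < fst x then a (fst x - snd x) else 0)"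
    using finite_B by (simp add: sum.inter_filter case_prod_unfold)
  also have "\<dots> = (\<Sum>(l, m) \<in> B p \<times> B p. if m < l then a (l - m) else 0)"
    by (simp add: case_prod_unfold)
  also have "\<dots> = (\<Sum>l\<in>B p. \<Sum>m\<in>B p. if m < l then a (l - m) else 0)"
    by (rule sum.cartesian_product[symmetric])
  also have "\<dots> = (\<Sum>m\<in>B p. \<Sum>l\<in>B p. if m < l then a (l - m) else 0)"
    by (rule sum.swap)
  also have "\<dots> \<le> (\<Sum>m\<in>B p. sum a (DD p))"
  proof (rule sum_mono)
    fix m assume m: "m \<in> B p"
    have "(\<Sum>l\<in>B p. if m < l then a (l - m) else 0) = (\<Sum>l\<in>{l\<in>B p. m < l}. a (l - m))"
      using finite_B by (simp add: sum.inter_filter)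
    also have "\<dots> = sum a ((\<lambda>l. l - m) ` {l\<in>B p. m < l})"
      by (rule sum.reindex[symmetric, unfolded comp_def]) (auto simp: inj_on_def)
    also have "\<dots> \<le> sum a (DD p)"
    proof (rule sum_mono2[OF finite_DD])
      show "(\<lambda>l. l - m) ` {l\<in>B p. m < l} \<subseteq> DD p"
      proof
        fix d assume "d \<in> (\<lambda>l. l - m) ` {l\<in>B p. m < l}"
        then obtain l where l: "l \<in> B p" "m < l" "d = l - m" by auto
        obtain i where i: "l = i * p" "1 \<le> i" "i \<le> p" using l unfolding B_def by auto
        obtain k where k: "m = k * p" "1 \<le> k" "k \<le> p" using m unfolding B_def by auto
        have "d = (i - k) * p" using l i k by (simp add: diff_mult_distrib)
        moreover have "i - k < p" using i k by linarith
        moreover have "p > 0" using i by auto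
        ultimately have "d < p * p" by (simp add: mult.commute)
        moreover have "p dvd d" using \<open>d = (i-k)*p\<close> by simp
        ultimately show "d \<in> DD p" using l unfolding DD_def by auto
      qed
    qed (use nonneg in \<open>auto simp: DD_def\<close>)
    finally show "(\<Sum>l\<in>B p. if m < l then a (l - m) else 0) \<le> sum a (DD p)" .
  qed
  also have "\<dots> = real (card (B p)) * sum a (DD p)" by simp
  also have "\<dots> \<le> real p * sum a (DD p)"
    using card_B DDnn by (intro mult_right_mono) auto
  finally show ?thesis .
qed

lemma DD_total:
  fixes a :: "nat \<Rightarrow> real"
  assumes nonneg: "\<And>n. n \<ge> 1 \<Longrightarrow> a n \<ge> 0"
    and summ: "summable (\<lambda>n. a (Suc n))"
    and bound: "(\<Sum>n. a (Suc n)) \<le> 1"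
    and Q: "finite Q" "\<And>p. p \<in> Q \<Longrightarrow> prime p"
  shows "(\<Sum>p\<in>Q. sum a (DD p)) \<le> 1"
proof -
  define N where "N = (\<Sum>p\<in>Q. p * p)"
  have "(\<Sum>p\<in>Q. sum a (DD p)) = sum a (\<Union>p\<in>Q. DD p)"
  proof (rule sum.UNION_disjoint[symmetric, OF Q(1)])
    show "\<forall>i\<in>Q. finite (DD i)" by (simp add: finite_DD)
    show "\<forall>i\<in>Q. \<forall>j\<in>Q. i \<noteq> j \<longrightarrow> DD i \<inter> DD j = {}"
      using DD_disjoint Q(2) by blast
  qed
  also have "\<dots> \<le> sum a {1..N}"
  proof (rule sum_mono2)
    show "(\<Union>p\<in>Q. DD p) \<subseteq> {1..N}"
    proof
      fix d assume "d \<in> (\<Union>p\<in>Q. DD p)"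
      then obtain p where p: "p \<in> Q" "d \<in> DD p" by auto
      have "p * p \<le> N" unfolding N_def using p Q by (intro member_le_sum) auto
      then show "d \<in> {1..N}" using p unfolding DD_def by auto
    qed
  qed (use nonneg in auto)
  also have "\<dots> = (\<Sum>n<N. a (Suc n))"
    using sum.atLeast1_atMost_eq[of a N] by simp
  also have "\<dots> \<le> (\<Sum>n. a (Suc n))" by (intro sum_le_suminf summ) (auto intro: nonneg)
  finally show ?thesis using bound by linarith
qed

theorem corollary6:
  fixes a :: "nat \<Rightarrow> real"
  assumes nonneg: "\<And>n. n \<ge> 1 \<Longrightarrow> a n \<ge> 0"
    and summ: "summable (\<lambda>n. a (Suc n))"
    and bound: "(\<Sum>n. a (Suc n)) \<le> 1"
    and eps: "\<epsilon> > 0"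
  shows "infinite {n::nat. n \<ge> 1 \<and>
           (\<Sum>(l, m) \<in> {(l, m). l \<in> B n \<and> m \<in> B n \<and> m < l}. a (l - m)) < \<epsilon>}"
  (is "infinite ?S")
proof
  assume fin: "finite ?S"
  from fin obtain M where M0: "\<forall>n\<in>?S. n < M" unfolding finite_nat_set_iff_bounded by blast
  have M: "\<And>n. n \<in> ?S \<Longrightarrow> n < M" using M0 by blast
  obtain c :: nat where c: "real c > 2 / \<epsilon>" using reals_Archimedean2 by blast
  obtain X where X: "(\<Sum>p\<in>{p. prime p \<and> M < p \<and> p \<le> X}. 1 / real p) \<ge> real c / 2"
    using primes_diverge by blast
  let ?Q = "{p. prime p \<and> M < p \<and> p \<le> X}"
  have key: "\<epsilon> * (1 / real p) \<le> sum a (DD p)" if p: "p \<in> ?Q" for p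
  proof -
    have "M < p" using p by simp
    then have "p \<notin> ?S" using M[of p] by (meson less_asym)
    moreover have "p \<ge> 1" using p prime_gt_0_nat by simp
    ultimately have "\<epsilon> \<le> (\<Sum>(l, m) \<in> {(l, m). l \<in> B p \<and> m \<in> B p \<and> m < l}. a (l - m))" by auto
    also have "\<dots> \<le> real p * sum a (DD p)" by (rule pair_sum_bound[OF nonneg])
    finally show ?thesis using \<open>p \<ge> 1\<close> by (simp add: field_simps)
  qed
  have "\<epsilon> * (real c / 2) \<le> \<epsilon> * (\<Sum>p\<in>?Q. 1 / real p)" using X eps by simp
  also have "\<dots> = (\<Sum>p\<in>?Q. \<epsilon> * (1 / real p))" by (simp add: sum_distrib_left)
  also have "\<dots> \<le> (\<Sum>p\<in>?Q. sum a (DD p))" by (intro sum_mono key)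
  also have "\<dots> \<le> 1" by (rule DD_total[OF nonneg summ bound]) auto
  finally have "\<epsilon> * real c \<le> 2" by simp
  moreover have "\<epsilon> * real c > 2" using c eps by (simp add: field_simps)
  ultimately show False by simp
qed

end
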